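(* A family of structures $\mathfrak{K}$ is $\mathbf{nUs}$-learnable if and only if it is $\mathbf{Dec}$-learnable.
   Context: All structures are countable, have domain $\mathbb{N}$, are in a finite relational signature, and are identified with their atomic diagrams. A family of structures $\mathfrak{K}$ is a countable set of pairwise nonisomorphic such structures. $\mathcal{S}\restriction_s$ is the finite substructure of $\mathcal{S}$ on $\{0,\dots,s\}$. $\mathrm{LD}(\mathfrak{K})$ is the set of structures with domain $\mathbb{N}$ isomorphic to a member of $\mathfrak{K}$. The hypothesis space is $\{\ulcorner\mathcal{A}\urcorner:\mathcal{A}\in\mathfrak{K}\}\cup\{?\}$ (distinct formal symbols); a learner is an arbitrary function $\mathbf{M}$ from $\{\mathcal{S}\restriction_s:\mathcal{S}\in\mathrm{LD}(\mathfrak{K}),s\in\mathbb{N}\}$ to the hypothesis space. $\mathbf{M}$ $\mathbf{Ex}$-learns $\mathfrak{K}$ if for every $\mathcal{S}\in\mathrm{LD}(\mathfrak{K})$, $\mathbf{M}(\mathcal{S}\restriction_n)$ is eventually constantly $\ulcorner\mathcal{A}\urcorner$ where $\mathcal{A}\in\mathfrak{K}$, $\mathcal{A}\cong\mathcal{S}$. $\mathbf{M}$ $\mathbf{nUs}$-learns $\mathfrak{K}$ if it $\mathbf{Ex}$-learns $\mathfrak{K}$ and for every $\mathcal{S}\in\mathrm{LD}(\mathfrak{K})$ with $\mathcal{S}\cong\mathcal{A}\in\mathfrak{K}$, if $n_0$ is least with $\mathbf{M}(\mathcal{S}\restriction_{n_0})=\ulcorner\mathcal{A}\urcorner$ then $\mathbf{M}(\mathcal{S}\restriction_m)=\ulcorner\mathcal{A}\urcorner$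 for all $m>n_0$. $\mathbf{M}$ $\mathbf{Dec}$-learns $\mathfrak{K}$ if it $\mathbf{Ex}$-learns $\mathfrak{K}$ and for every $\mathcal{S}\in\mathrm{LD}(\mathfrak{K})$, every $\mathcal{A}\in\mathfrak{K}$ and every $n$: if $\mathbf{M}(\mathcal{S}\restriction_n)=\ulcorner\mathcal{A}\urcorner\neq\mathbf{M}(\mathcal{S}\restriction_{n+1})$ then $\mathbf{M}(\mathcal{S}\restriction_m)\neq\ulcorner\mathcal{A}\urcorner$ for all $m>n$. A family is $\mathbf{nUs}$-/$\mathbf{Dec}$-learnable if some learner $\mathbf{nUs}$-/$\mathbf{Dec}$-learns it. *)

theory Defs
  imports Main "HOL-Library.Countable_Set"
begin

text \<open>A finite relational signature is a list of arities: relation symbol i (for i < length sig)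
has arity sig ! i. A structure with domain nat is identified with its atomic diagram, i.e. for
each relation symbol the set of tuples (lists of the right length) on which it holds.\<close>

type_synonym sig = "nat list"
type_synonym struc = "nat \<Rightarrow> nat list \<Rightarrow> bool"

definition wf_struc :: "sig \<Rightarrow> struc \<Rightarrow> bool" where
  "wf_struc \<sigma> S \<longleftrightarrow> (\<forall>i xs. S i xs \<longrightarrow> i < length \<sigma> \<and> length xs = \<sigma> ! i)"

definition iso :: "sig \<Rightarrow> struc \<Rightarrow> struc \<Rightarrow> bool" where
  "iso \<sigma> S T \<longleftrightarrow> (\<exists>f. bij (f :: nat \<Rightarrow> nat) \<and>
      (\<forall>i < length \<sigma>. \<forall>xs. length xs = \<sigma> ! i \<longrightarrow> (S i xs \<longleftrightarrow> T i (map f xs))))"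

definition family :: "sig \<Rightarrow> struc set \<Rightarrow> bool" where
  "family \<sigma> K \<longleftrightarrow> countable K \<and> (\<forall>A\<in>K. wf_struc \<sigma> A) \<and>
     (\<forall>A\<in>K. \<forall>B\<in>K. iso \<sigma> A B \<longrightarrow> A = B)"

definition LD :: "sig \<Rightarrow> struc set \<Rightarrow> struc set" where
  "LD \<sigma> K = {S. wf_struc \<sigma> S \<and> (\<exists>A\<in>K. iso \<sigma> S A)}"

definition restr :: "struc \<Rightarrow> nat \<Rightarrow> nat \<times> struc" where
  "restr S s = (s, (\<lambda>i xs. S i xs \<and> set xs \<subseteq> {0..s}))"

text \<open>Hypotheses: Some A stands for the code of A (A in K), None for '?'.
A learner maps finite restrictions to hypotheses.\<close>
type_synonym learner = "nat \<times> struc \<Rightarrow> struc option"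

definition is_learner :: "sig \<Rightarrow> struc set \<Rightarrow> learner \<Rightarrow> bool" where
  "is_learner \<sigma> K M \<longleftrightarrow>
     (\<forall>S\<in>LD \<sigma> K. \<forall>s. M (restr S s) = None \<or> (\<exists>A\<in>K. M (restr S s) = Some A))"

definition Ex_learns :: "sig \<Rightarrow> struc set \<Rightarrow> learner \<Rightarrow> bool" where
  "Ex_learns \<sigma> K M \<longleftrightarrow> (\<forall>S\<in>LD \<sigma> K. \<exists>A\<in>K. iso \<sigma> A S \<and>
       (\<exists>n0. \<forall>n\<ge>n0. M (restr S n) = Some A))"

definition nUs_learns :: "sig \<Rightarrow> struc set \<Rightarrow> learner \<Rightarrow> bool" where
  "nUs_learns \<sigma> K M \<longleftrightarrow> Ex_learns \<sigma> K M \<and>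
     (\<forall>S\<in>LD \<sigma> K. \<forall>A\<in>K. iso \<sigma> S A \<longrightarrow>
        (\<forall>n0. M (restr S n0) = Some A \<and> (\<forall>n<n0. M (restr S n) \<noteq> Some A) \<longrightarrow>
           (\<forall>m>n0. M (restr S m) = Some A)))"

definition Dec_learns :: "sig \<Rightarrow> struc set \<Rightarrow> learner \<Rightarrow> bool" where
  "Dec_learns \<sigma> K M \<longleftrightarrow> Ex_learns \<sigma> K M \<and>
     (\<forall>S\<in>LD \<sigma> K. \<forall>A\<in>K. \<forall>n. M (restr S n) = Some A \<and> M (restr S (Suc n)) \<noteq> Some A \<longrightarrow>
        (\<forall>m>n. M (restr S m) \<noteq> Some A))"

definition nUs_learnable :: "sig \<Rightarrow> struc set \<Rightarrow> bool" where
  "nUs_learnable \<sigma> K \<longleftrightarrow> (\<exists>M. is_learner \<sigma> K M \<and> nUs_learns \<sigma> K M)"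

definition Dec_learnable :: "sig \<Rightarrow> struc set \<Rightarrow> bool" where
  "Dec_learnable \<sigma> K \<longleftrightarrow> (\<exists>M. is_learner \<sigma> K M \<and> Dec_learns \<sigma> K M)"

end

theory Submission
  imports Defs
begin

lemma iso_trans:
  assumes "iso \<sigma> A B" "iso \<sigma> B C" shows "iso \<sigma> A C"
proof -
  obtain f where f: "bij f" "\<forall>i < length \<sigma>. \<forall>xs. length xs = \<sigma> ! i \<longrightarrow> (A i xs \<longleftrightarrow> B i (map f xs))"
    using assms(1) unfolding iso_def by blast
  obtain g where g: "bij g" "\<forall>i < length \<sigma>. \<forall>xs. length xs = \<sigma> ! i \<longrightarrow> (B i xs \<longleftrightarrow> C i (map g xs))"
    using assms(2) unfolding iso_def by blast
  have "bij (g \<circ> f)" using f g bij_comp by blast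
  moreover have "\<forall>i < length \<sigma>. \<forall>xs. length xs = \<sigma> ! i \<longrightarrow> (A i xs \<longleftrightarrow> C i (map (g \<circ> f) xs))"
    using f g by simp
  ultimately show ?thesis unfolding iso_def by blast
qed

lemma find_drop:
  assumes "f n0 = a" "f m \<noteq> a" "n0 < m"
  shows "\<exists>k. n0 \<le> k \<and> k < m \<and> f k = a \<and> f (Suc k) \<noteq> a"
  using assms
proof (induction m)
  case 0 then show ?case by simp
next
  case (Suc m)
  show ?case
  proof (cases "f m = a")
    case True then show ?thesis using Suc by (intro exI[of _ m]) auto
  next
    case False
    then have "n0 < m" using Suc by (cases "n0 = m") auto
    then show ?thesis using Suc.IH[OF Suc.prems(1) False] by auto
  qed
qed

lemma restr_restr: "n \<le> s \<Longrightarrow> restr (snd (restr S s)) n = restr S n"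
  unfolding restr_def by (auto intro!: ext)

lemma Dec_to_nUs:
  assumes fam: "family \<sigma> K" and D: "Dec_learns \<sigma> K M"
  shows "nUs_learns \<sigma> K M"
  unfolding nUs_learns_def
proof (intro conjI ballI allI impI)
  show "Ex_learns \<sigma> K M" using D unfolding Dec_learns_def by blast
next
  fix S A n0 m
  assume S: "S \<in> LD \<sigma> K" and A: "A \<in> K" and iSA: "iso \<sigma> S A"
    and h: "M (restr S n0) = Some A \<and> (\<forall>n<n0. M (restr S n) \<noteq> Some A)" and m: "n0 < m"
  show "M (restr S m) = Some A"
  proof (rule ccontr)
    assume nm: "M (restr S m) \<noteq> Some A"
    obtain k where k: "n0 \<le> k" "k < m" "M (restr S k) = Some A" "M (restr S (Suc k)) \<noteq> Some A"
      using find_drop[of "\<lambda>n. M (restr S n)" n0 "Some A" m] h nm m by auto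
    have never: "\<forall>m'>k. M (restr S m') \<noteq> Some A"
      using D S A k unfolding Dec_learns_def by blast
    obtain A' n1 where A': "A' \<in> K" "iso \<sigma> A' S" "\<forall>n\<ge>n1. M (restr S n) = Some A'"
      using D S unfolding Dec_learns_def Ex_learns_def by blast
    have "iso \<sigma> A' A" using iso_trans A'(2) iSA by blast
    then have "A' = A" using fam A A'(1) unfolding family_def by blast
    then show False using never A'(3)[rule_format, of "max n1 (Suc k)"] by auto
  qed
qed

definition mkDec :: "learner \<Rightarrow> learner" where
  "mkDec M = (\<lambda>(s, T). case M (s, T) of None \<Rightarrow> None
     | Some A \<Rightarrow> if (\<forall>n\<le>s. M (restr T n) = Some A \<longrightarrow> (\<forall>m. n \<le> m \<and> m \<le> s \<longrightarrow> M (restr T m) = Some A))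
                 then Some A else None)"

lemma mkDec_restr: "mkDec M (restr S s) = (case M (restr S s) of None \<Rightarrow> None
     | Some A \<Rightarrow> if (\<forall>n\<le>s. M (restr S n) = Some A \<longrightarrow> (\<forall>m. n \<le> m \<and> m \<le> s \<longrightarrow> M (restr S m) = Some A))
                 then Some A else None)"
proof -
  define T where "T = snd (restr S s)"
  have e: "restr S s = (s, T)" unfolding restr_def T_def by simp
  have r: "\<And>n. n \<le> s \<Longrightarrow> restr T n = restr S n" unfolding T_def by (rule restr_restr)
  have c: "\<And>A. (\<forall>n\<le>s. M (restr T n) = Some A \<longrightarrow> (\<forall>m. n \<le> m \<and> m \<le> s \<longrightarrow> M (restr T m) = Some A))
     = (\<forall>n\<le>s. M (restr S n) = Some A \<longrightarrow> (\<forall>m. n \<le> m \<and> m \<le> s \<longrightarrow> M (restr S m) = Some A))"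
  proof -
    fix A
    show "?thesis A"
    proof (intro iffI allI impI)
      fix n m
      assume H: "\<forall>n\<le>s. M (restr T n) = Some A \<longrightarrow> (\<forall>m. n \<le> m \<and> m \<le> s \<longrightarrow> M (restr T m) = Some A)"
        and n: "n \<le> s" and a: "M (restr S n) = Some A" and nm: "n \<le> m \<and> m \<le> s"
      have "M (restr T n) = Some A" using a r n by simp
      then have "M (restr T m) = Some A" using H n nm by blast
      then show "M (restr S m) = Some A" using r nm by simp
    next
      fix n m
      assume H: "\<forall>n\<le>s. M (restr S n) = Some A \<longrightarrow> (\<forall>m. n \<le> m \<and> m \<le> s \<longrightarrow> M (restr S m) = Some A)"
        and n: "n \<le> s" and a: "M (restr T n) = Some A" and nm: "n \<le> m \<and> m \<le> s"
      have "M (restr S n) = Some A" using a r n by simp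
      then have "M (restr S m) = Some A" using H n nm by blast
      then show "M (restr T m) = Some A" using r nm by simp
    qed
 
  qed
  have "mkDec M (restr S s) = (case M (s, T) of None \<Rightarrow> None
     | Some A \<Rightarrow> if (\<forall>n\<le>s. M (restr T n) = Some A \<longrightarrow> (\<forall>m. n \<le> m \<and> m \<le> s \<longrightarrow> M (restr T m) = Some A))
                 then Some A else None)"
    unfolding e mkDec_def by (simp only: prod.case)
  then show ?thesis unfolding c e .
qed

lemma mkDec_Some: "mkDec M (restr S s) = Some A \<longleftrightarrow> M (restr S s) = Some A \<and>
   (\<forall>n\<le>s. M (restr S n) = Some A \<longrightarrow> (\<forall>m. n \<le> m \<and> m \<le> s \<longrightarrow> M (restr S m) = Some A))"
  unfolding mkDec_restr by (auto split: option.splits)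

lemma nUs_to_Dec:
  assumes L: "is_learner \<sigma> K M" and N: "nUs_learns \<sigma> K M"
  shows "is_learner \<sigma> K (mkDec M) \<and> Dec_learns \<sigma> K (mkDec M)"
proof (intro conjI)
  show "is_learner \<sigma> K (mkDec M)"
    unfolding is_learner_def
  proof (intro ballI allI)
    fix S s assume "S \<in> LD \<sigma> K"
    then have "M (restr S s) = None \<or> (\<exists>A\<in>K. M (restr S s) = Some A)" using L unfolding is_learner_def by blast
    then show "mkDec M (restr S s) = None \<or> (\<exists>A\<in>K. mkDec M (restr S s) = Some A)"
      unfolding mkDec_restr by (auto split: option.splits)
  qed
  show "Dec_learns \<sigma> K (mkDec M)"
    unfolding Dec_learns_def
  proof (intro conjI)
    show "Ex_learns \<sigma> K (mkDec M)"
      unfolding Ex_learns_def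
    proof
      fix S assume S: "S \<in> LD \<sigma> K"
      obtain A n1 where A: "A \<in> K" "iso \<sigma> A S" "\<forall>n\<ge>n1. M (restr S n) = Some A"
        using N S unfolding nUs_learns_def Ex_learns_def by blast
      define n0 where "n0 = (LEAST n. M (restr S n) = Some A)"
      have h0: "M (restr S n0) = Some A" unfolding n0_def by (rule LeastI[of _ n1]) (use A in auto)
      have hb: "\<forall>n<n0. M (restr S n) \<noteq> Some A" unfolding n0_def using not_less_Least by blast
      have iSA: "iso \<sigma> S A"
      proof -
        obtain f where f: "bij f" "\<forall>i < length \<sigma>. \<forall>xs. length xs = \<sigma> ! i \<longrightarrow> (A i xs \<longleftrightarrow> S i (map f xs))"
          using A(2) unfolding iso_def by blast
        have "bij (inv f)" using f(1) bij_imp_bij_inv by blast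
        moreover have "\<forall>i < length \<sigma>. \<forall>xs. length xs = \<sigma> ! i \<longrightarrow> (S i xs \<longleftrightarrow> A i (map (inv f) xs))"
        proof (intro allI impI)
          fix i and xs :: "nat list" assume "i < length \<sigma>" "length xs = \<sigma> ! i"
          then have "A i (map (inv f) xs) \<longleftrightarrow> S i (map f (map (inv f) xs))" using f(2) by simp
          moreover have "map f (map (inv f) xs) = xs" using f(1)
            by (simp add: bij_is_surj surj_f_inv_f map_idI)
          ultimately show "S i xs \<longleftrightarrow> A i (map (inv f) xs)" by simp
        qed
        ultimately show ?thesis unfolding iso_def by blast
      qed
      have after: "\<forall>m\<ge>n0. M (restr S m) = Some A"
      proof (intro allI impI)
        fix m assume m: "n0 \<le> m"
        show "M (restr S m) = Some A"
        proof (cases "m = n0")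
          case True then show ?thesis using h0 by simp
        next
          case False then have "n0 < m" using m by simp
          then show ?thesis using N S A(1) iSA h0 hb unfolding nUs_learns_def by blast
        qed
      qed
      have "\<forall>n\<ge>n0. mkDec M (restr S n) = Some A"
      proof (intro allI impI)
        fix n assume n: "n0 \<le> n"
        have "\<forall>k\<le>n. M (restr S k) = Some A \<longrightarrow> (\<forall>j. k \<le> j \<and> j \<le> n \<longrightarrow> M (restr S j) = Some A)"
        proof (intro allI impI)
          fix k j assume k: "k \<le> n" "M (restr S k) = Some A" and j: "k \<le> j \<and> j \<le> n"
          have "\<not> k < n0" using hb k(2) by blast
          then show "M (restr S j) = Some A" using after j by simp
        qed
        then show "mkDec M (restr S n) = Some A" unfolding mkDec_Some using after n by blast
      qed
      then show "\<exists>A\<in>K. iso \<sigma> A S \<and> (\<exists>n0. \<forall>n\<ge>n0. mkDec M (restr S n) = Some A)"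
        using A by blast
    qed
    show "\<forall>S\<in>LD \<sigma> K. \<forall>A\<in>K. \<forall>n. mkDec M (restr S n) = Some A \<and> mkDec M (restr S (Suc n)) \<noteq> Some A \<longrightarrow>
        (\<forall>m>n. mkDec M (restr S m) \<noteq> Some A)"
    proof (intro ballI allI impI)
      fix S A n m
      assume h: "mkDec M (restr S n) = Some A \<and> mkDec M (restr S (Suc n)) \<noteq> Some A" and m: "n < m"
      have a: "M (restr S n) = Some A"
        and b: "\<forall>k\<le>n. M (restr S k) = Some A \<longrightarrow> (\<forall>j. k \<le> j \<and> j \<le> n \<longrightarrow> M (restr S j) = Some A)"
        using h unfolding mkDec_Some by auto
      have c: "M (restr S (Suc n)) \<noteq> Some A"
      proof
        assume c': "M (restr S (Suc n)) = Some A"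
        have "\<forall>k\<le>Suc n. M (restr S k) = Some A \<longrightarrow> (\<forall>j. k \<le> j \<and> j \<le> Suc n \<longrightarrow> M (restr S j) = Some A)"
        proof (intro allI impI)
          fix k j assume k: "k \<le> Suc n" "M (restr S k) = Some A" and j: "k \<le> j \<and> j \<le> Suc n"
          show "M (restr S j) = Some A"
          proof (cases "j = Suc n")
            case True then show ?thesis using c' by simp
          next
            case False
            then have "j \<le> n" "k \<le> n" using j by auto
            then show ?thesis using b k j by blast
          qed
        qed
        then show False using h c' unfolding mkDec_Some by blast
      qed
      show "mkDec M (restr S m) \<noteq> Some A"
      proof
        assume "mkDec M (restr S m) = Some A"
        then have "\<forall>k\<le>m. M (restr S k) = Some A \<longrightarrow> (\<forall>j. k \<le> j \<and> j \<le> m \<longrightarrow> M (restr S j) = Some A)"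
          unfolding mkDec_Some by blast
        moreover have "n \<le> m" "n \<le> Suc n \<and> Suc n \<le> m" using m by auto
        ultimately have "M (restr S (Suc n)) = Some A" using a by blast
        then show False using c by simp
      qed
    qed
  qed
qed

theorem mainTheorem10:
  fixes \<sigma> :: sig and K :: "struc set"
  assumes "family \<sigma> K"
  shows "nUs_learnable \<sigma> K \<longleftrightarrow> Dec_learnable \<sigma> K"
  using nUs_to_Dec Dec_to_nUs[OF assms]
  unfolding nUs_learnable_def Dec_learnable_def by blast

end
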